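(* Let $X_1,X_2,\ldots$ be i.i.d. real-valued random variables and set $Z_i=|X_i|$. Let $x_{\max}:=\operatorname{ess\,sup} Z_1=\inf\{x\in\mathbb{R}:\mathbb{P}(Z_1\le x)=1\}$ and assume $x_{\max}<\infty$; equivalently, $\mathbb{P}(Z_1\le x_{\max})=1$ and $\mathbb{P}(Z_1>x_{\max}-\varepsilon)>0$ for every $\varepsilon>0$. For each block size $g\ge 1$, with the block $X=(X_1,\dots,X_g)$, let $R_g^\star$ and $R_{\mathrm{PO2},g}^\star$ be the best single-grid risk and the best two-grid risk defined below. Then $$\lim_{g\to\infty}\bigl(R_g^\star-R_{\mathrm{PO2},g}^\star\bigr)=0.$$
   Context: Grid space: $\overline{\mathcal C}:=\{B=(b_0,\dots,b_7):0=b_0\le b_1\le\cdots\le b_6\le b_7=1\}$. For $B\in\overline{\mathcal C}$ and $a\in[0,1]$, $\psi_B(a):=\min_{0\le j\le 7}(a-b_j)^2$. For a block $X=(X_1,\dots,X_g)\in\mathbb{R}^g$ let $M_g:=\max_{1\le i\le g}|X_i|$; if $M_g>0$ put $A_{i,g}:=|X_i|/M_g\in[0,1]$, and if $M_g=0$ put $A_{i,g}:=0$ (zero-block convention, loss zero). The block loss is $L_B^{(g)}(X):=M_g^2\,\frac1g\sum_{i=1}^g\psi_B(A_{i,g})$. Define $R_g^\star:=\min_{B\in\overline{\mathcal C}}\mathbb{E}\,L_B^{(g)}(X)$ and $R_{\mathrm{PO2},g}^\star:=\inf_{B_1,B_2\in\overline{\mathcal C}}\mathbb{E}\bigl[\min\{L_{B_1}^{(g)}(X),L_{B_2}^{(g)}(X)\}\bigr]$.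 *)

theory Defs
  imports "HOL-Probability.Probability"
begin

text \<open>Grids B = (b_0,...,b_7) are represented as functions nat => real;
  only the values at 0..7 matter.\<close>

definition grids :: "(nat \<Rightarrow> real) set" where
  "grids = {B. B 0 = 0 \<and> B 7 = 1 \<and> (\<forall>j<7. B j \<le> B (Suc j))}"

definition psi :: "(nat \<Rightarrow> real) \<Rightarrow> real \<Rightarrow> real" where
  "psi B a = Min ((\<lambda>j. (a - B j)^2) ` {0..7})"

text \<open>Block (x_1,...,x_g), given as a function nat => real on indices 1..g.\<close>

definition block_max :: "nat \<Rightarrow> (nat \<Rightarrow> real) \<Rightarrow> real" where
  "block_max g x = Max ((\<lambda>i. \<bar>x i\<bar>) ` {1..g})"

definition block_A :: "nat \<Rightarrow> (nat \<Rightarrow> real) \<Rightarrow> nat \<Rightarrow> real" where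
  "block_A g x i = (if block_max g x > 0 then \<bar>x i\<bar> / block_max g x else 0)"

definition block_loss :: "(nat \<Rightarrow> real) \<Rightarrow> nat \<Rightarrow> (nat \<Rightarrow> real) \<Rightarrow> real" where
  "block_loss B g x =
     (if block_max g x = 0 then 0
      else (block_max g x)^2 * ((1 / real g) * (\<Sum>i=1..g. psi B (block_A g x i))))"

definition R_star :: "'a measure \<Rightarrow> (nat \<Rightarrow> 'a \<Rightarrow> real) \<Rightarrow> nat \<Rightarrow> real" where
  "R_star M X g = (INF B\<in>grids. integral\<^sup>L M (\<lambda>\<omega>. block_loss B g (\<lambda>i. X i \<omega>)))"

definition R_PO2 :: "'a measure \<Rightarrow> (nat \<Rightarrow> 'a \<Rightarrow> real) \<Rightarrow> nat \<Rightarrow> real" where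
  "R_PO2 M X g = (INF BB\<in>grids \<times> grids.
      integral\<^sup>L M (\<lambda>\<omega>. min (block_loss (fst BB) g (\<lambda>i. X i \<omega>))
                              (block_loss (snd BB) g (\<lambda>i. X i \<omega>))))"

end

theory Submission
  imports Defs
begin



definition phi :: "(nat \<Rightarrow> real) \<Rightarrow> real \<Rightarrow> real \<Rightarrow> real" where
  "phi B m z = Min ((\<lambda>j. (z - m * B j)^2) ` {0..7})"

lemma grid_range:
  assumes "B \<in> grids" "j \<le> 7"
  shows "0 \<le> B j \<and> B j \<le> 1"
proof -
  from assms(1) have h: "B 0 = 0" "B 7 = 1" "\<And>j. j < 7 \<Longrightarrow> B j \<le> B (Suc j)"
    by (auto simp: grids_def)
  have "B 0 \<le> B 1" "B 1 \<le> B 2" "B 2 \<le> B 3" "B 3 \<le> B 4" "B 4 \<le> B 5" "B 5 \<le> B 6" "B 6 \<le> B 7"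
    using h(3)[of 0] h(3)[of 1] h(3)[of 2] h(3)[of 3] h(3)[of 4] h(3)[of 5] h(3)[of 6]
    by (simp_all add: numeral_eq_Suc)
  moreover have "j = 0 \<or> j = 1 \<or> j = 2 \<or> j = 3 \<or> j = 4 \<or> j = 5 \<or> j = 6 \<or> j = 7"
    using assms(2) by linarith
  ultimately show ?thesis using h(1,2) by auto
qed

lemma Min_scale:
  fixes f :: "nat \<Rightarrow> real"
  assumes "c \<ge> 0" "finite S" "S \<noteq> {}"
  shows "c * Min (f ` S) = Min ((\<lambda>j. c * f j) ` S)"
proof -
  have "mono (\<lambda>t. c * t)" using assms(1) by (auto intro: monoI mult_left_mono)
  from mono_Min_commute[OF this, of "f ` S"] assms show ?thesis
    by (simp add: image_image)
qed

lemma Min_diff: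
  fixes f h :: "nat \<Rightarrow> real"
  assumes "finite S" "S \<noteq> {}" "\<And>j. j \<in> S \<Longrightarrow> \<bar>f j - h j\<bar> \<le> d"
  shows "\<bar>Min (f ` S) - Min (h ` S)\<bar> \<le> d"
proof -
  have "Min (f ` S) \<in> f ` S" using assms by (intro Min_in) auto
  then obtain a where a: "a \<in> S" "Min (f ` S) = f a" by auto
  have "Min (h ` S) \<in> h ` S" using assms by (intro Min_in) auto
  then obtain b where b: "b \<in> S" "Min (h ` S) = h b" by auto
  have "Min (f ` S) \<le> f b" using b assms by auto
  moreover have "Min (h ` S) \<le> h a" using a assms by auto
  ultimately show ?thesis using assms(3)[OF a(1)] assms(3)[OF b(1)] a b by linarith
qed

lemma block_max_props:
  assumes "g \<ge> 1"
  shows "\<And>i. i \<in> {1..g} \<Longrightarrow> \<bar>x i\<bar> \<le> block_max g x"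
    and "block_max g x \<ge> 0"
    and "\<exists>i\<in>{1..g}. block_max g x = \<bar>x i\<bar>"
proof -
  show 1: "\<And>i. i \<in> {1..g} \<Longrightarrow> \<bar>x i\<bar> \<le> block_max g x"
    unfolding block_max_def by (intro Max_ge) auto
  show "block_max g x \<ge> 0" using 1[of 1] assms by force
  show "\<exists>i\<in>{1..g}. block_max g x = \<bar>x i\<bar>"
  proof -
    have "Max ((\<lambda>i. \<bar>x i\<bar>) ` {1..g}) \<in> (\<lambda>i. \<bar>x i\<bar>) ` {1..g}"
      using assms by (intro Max_in) auto
    then show ?thesis unfolding block_max_def by auto
  qed
qed

lemma block_max_le:
  assumes "g \<ge> 1" "\<And>i. i \<in> {1..g} \<Longrightarrow> \<bar>x i\<bar> \<le> c"
  shows "block_max g x \<le> c"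
  using block_max_props(3)[OF assms(1), of x] assms(2) by auto

lemma loss_eq:
  "block_loss B g x = (1 / real g) * (\<Sum>i=1..g. phi B (block_max g x) \<bar>x i\<bar>)"
proof (cases "g = 0")
  case True then show ?thesis by (simp add: block_loss_def)
next
  case False
  then have g: "g \<ge> 1" by simp
  show ?thesis
  proof (cases "block_max g x = 0")
    case True
    then have "\<And>i. i \<in> {1..g} \<Longrightarrow> x i = 0"
      using block_max_props(1)[OF g, of _ x] by force
    then have "(\<Sum>i=1..g. phi B (block_max g x) \<bar>x i\<bar>) = 0"
      by (intro sum.neutral) (simp add: phi_def True)
    then show ?thesis using True by (simp add: block_loss_def)
  next
    case False
    let ?M = "block_max g x"
    have pos: "?M > 0" using False block_max_props(2)[OF g, of x] by linarith
    have "\<And>i. ?M^2 * psi B (block_A g x i) = phi B ?M \<bar>x i\<bar>"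
    proof -
      fix i
      have "?M^2 * psi B (block_A g x i) = Min ((\<lambda>j. ?M^2 * (\<bar>x i\<bar> / ?M - B j)^2) ` {0..7})"
        unfolding psi_def block_A_def using pos by (subst Min_scale) auto
      also have "\<dots> = phi B ?M \<bar>x i\<bar>"
        unfolding phi_def using pos
        by (intro arg_cong[where f=Min] image_cong refl) (simp add: power2_eq_square field_simps)
      finally show "?M^2 * psi B (block_A g x i) = phi B ?M \<bar>x i\<bar>" .
    qed
    then show ?thesis using False
      by (simp add: block_loss_def sum_distrib_left)
  qed
qed

lemma phi_bounds:
  assumes "B \<in> grids" "0 \<le> z"
  shows "0 \<le> phi B M z" "phi B M z \<le> z^2"
proof -
  have "phi B M z \<le> (z - M * B 0)^2" unfolding phi_def by (intro Min_le) auto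
  then show "phi B M z \<le> z^2" using assms(1) by (simp add: grids_def)
  show "0 \<le> phi B M z" unfolding phi_def by (subst Min_ge_iff) auto
qed

lemma phi_lip:
  assumes "B \<in> grids" "0 \<le> z" "z \<le> m" "0 \<le> M" "M \<le> m"
  shows "\<bar>phi B M z - phi B m z\<bar> \<le> 2 * m * (m - M)"
  unfolding phi_def
proof (rule Min_diff)
  fix j :: nat assume "j \<in> {0..7}"
  then have b: "0 \<le> B j" "B j \<le> 1" using grid_range[OF assms(1)] by auto
  have e: "(z - M * B j)^2 - (z - m * B j)^2 = (m - M) * B j * (2 * z - (M + m) * B j)"
    by (simp add: power2_eq_square algebra_simps)
  have "\<bar>2 * z - (M + m) * B j\<bar> \<le> 2 * m"
  proof -
    have "0 \<le> (M + m) * B j" "(M + m) * B j \<le> 2 * m"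
      using b assms by (auto intro: mult_nonneg_nonneg) (smt (verit) mult_left_le mult_nonneg_nonneg)
    then show ?thesis using assms by linarith
  qed
  moreover have "\<bar>(m - M) * B j\<bar> \<le> (m - M)" using b assms
    by (simp add: abs_mult mult_left_le)
  ultimately have "\<bar>(m - M) * B j\<bar> * \<bar>2 * z - (M + m) * B j\<bar> \<le> (m - M) * (2 * m)"
    by (intro mult_mono) auto
  moreover have "\<bar>(z - M * B j)^2 - (z - m * B j)^2\<bar> = \<bar>(m - M) * B j\<bar> * \<bar>2 * z - (M + m) * B j\<bar>"
    by (simp only: e abs_mult)
  ultimately show "\<bar>(z - M * B j)^2 - (z - m * B j)^2\<bar> \<le> 2 * m * (m - M)"
    by (simp add: algebra_simps)
qed auto




locale blk = prob_space M for M :: "'a measure" +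
  fixes X :: "nat \<Rightarrow> 'a \<Rightarrow> real"
  assumes meas: "\<And>i. i \<ge> 1 \<Longrightarrow> X i \<in> borel_measurable M"
    and ind: "indep_vars (\<lambda>_. borel) X {1..}"
    and dis: "\<And>i. i \<ge> 1 \<Longrightarrow> distr M borel (X i) = distr M borel (X 1)"
    and bnd: "\<exists>c::real. AE \<omega> in M. \<bar>X 1 \<omega>\<bar> \<le> c"
begin

definition xm :: real where "xm = Inf {c. AE \<omega> in M. \<bar>X 1 \<omega>\<bar> \<le> c}"

lemma S_nonneg: "c \<in> {c. AE \<omega> in M. \<bar>X 1 \<omega>\<bar> \<le> c} \<Longrightarrow> 0 \<le> c"
proof (rule ccontr)
  assume h: "c \<in> {c. AE \<omega> in M. \<bar>X 1 \<omega>\<bar> \<le> c}" "\<not> 0 \<le> c"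
  from h(1) have "AE \<omega> in M. \<bar>X 1 \<omega>\<bar> \<le> c" by simp
  then have "AE \<omega> in M. False" by (rule eventually_mono) (use h(2) in simp)
  then show False using AE_False by simp
qed

lemma S_bdd: "bdd_below {c. AE \<omega> in M. \<bar>X 1 \<omega>\<bar> \<le> c}"
proof (rule bdd_belowI)
  fix c assume "c \<in> {c. AE \<omega> in M. \<bar>X 1 \<omega>\<bar> \<le> c}"
  then show "0 \<le> c" by (rule S_nonneg)
qed

lemma S_ne: "{c. AE \<omega> in M. \<bar>X 1 \<omega>\<bar> \<le> c} \<noteq> {}"
proof -
  obtain c where "AE \<omega> in M. \<bar>X 1 \<omega>\<bar> \<le> c" using bnd by blast
  then show ?thesis by blast
qed

lemma xm_nonneg: "0 \<le> xm"
  unfolding xm_def by (rule cInf_greatest[OF S_ne S_nonneg])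

lemma xm_ae: "AE \<omega> in M. \<bar>X 1 \<omega>\<bar> \<le> xm"
proof -
  have "\<And>n::nat. AE \<omega> in M. \<bar>X 1 \<omega>\<bar> \<le> xm + 1 / Suc n"
  proof -
    fix n :: nat
    have "xm < xm + 1 / Suc n" by simp
    then obtain c where c: "c \<in> {c. AE \<omega> in M. \<bar>X 1 \<omega>\<bar> \<le> c}" "c < xm + 1 / Suc n"
      unfolding xm_def using cInf_lessD[OF S_ne] by blast
    then show "AE \<omega> in M. \<bar>X 1 \<omega>\<bar> \<le> xm + 1 / Suc n" by (auto elim!: eventually_mono)
  qed
  then have "AE \<omega> in M. \<forall>n::nat. \<bar>X 1 \<omega>\<bar> \<le> xm + 1 / Suc n"
    by (simp add: AE_all_countable)
  then show ?thesis
  proof (rule AE_mp, intro AE_I2 impI)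
    fix \<omega> assume h: "\<forall>n::nat. \<bar>X 1 \<omega>\<bar> \<le> xm + 1 / Suc n"
    show "\<bar>X 1 \<omega>\<bar> \<le> xm"
    proof (rule ccontr)
      assume "\<not> \<bar>X 1 \<omega>\<bar> \<le> xm"
      then have "0 < \<bar>X 1 \<omega>\<bar> - xm" by simp
      then obtain n where "1 / real (Suc n) < \<bar>X 1 \<omega>\<bar> - xm"
        using reals_Archimedean by (metis inverse_eq_divide)
      then show False using h[rule_format, of n] by simp
    qed
  qed
qed

lemma meas_i: "i \<in> {1..g} \<Longrightarrow> X i \<in> borel_measurable M"
  using meas by auto

lemma xm_ae_i: assumes "i \<ge> 1" shows "AE \<omega> in M. \<bar>X i \<omega>\<bar> \<le> xm"
proof -
  have mi: "X i \<in> measurable M borel" using meas assms by simp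
  have m1: "X 1 \<in> measurable M borel" using meas by simp
  have P: "{x \<in> space borel. \<bar>x::real\<bar> \<le> xm} \<in> sets borel" by measurable
  have A1: "AE x in distr M borel (X 1). \<bar>x\<bar> \<le> xm"
    using xm_ae by (simp only: AE_distr_iff[OF m1 P])
  have "AE x in distr M borel (X i). \<bar>x\<bar> \<le> xm" unfolding dis[OF assms] by (rule A1)
  then show ?thesis by (simp only: AE_distr_iff[OF mi P])
qed

lemma xm_ae_all: "AE \<omega> in M. \<forall>i\<in>{1..g}. \<bar>X i \<omega>\<bar> \<le> xm"
  by (rule AE_finite_allI) (auto intro: xm_ae_i)

lemma xm_sharp:
  assumes "e > 0"
  shows "prob {\<omega>\<in>space M. \<bar>X 1 \<omega>\<bar> \<le> xm - e} < 1"
proof (rule ccontr)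
  assume "\<not> ?thesis"
  then have "prob {\<omega>\<in>space M. \<bar>X 1 \<omega>\<bar> \<le> xm - e} = 1" using prob_le_1 by (meson antisym not_less)
  then have "AE \<omega> in M. \<omega> \<in> {\<omega>\<in>space M. \<bar>X 1 \<omega>\<bar> \<le> xm - e}" by (rule AE_prob_1)
  then have "AE \<omega> in M. \<bar>X 1 \<omega>\<bar> \<le> xm - e" by (rule eventually_mono) simp
  then have "xm - e \<in> {c. AE \<omega> in M. \<bar>X 1 \<omega>\<bar> \<le> c}" by simp
  then have "xm \<le> xm - e" unfolding xm_def by (rule cInf_lower[OF _ S_bdd])
  then show False using assms by simp
qed

lemma prob_i:
  assumes "i \<ge> 1"
  shows "prob {\<omega>\<in>space M. \<bar>X i \<omega>\<bar> \<le> t} = prob {\<omega>\<in>space M. \<bar>X 1 \<omega>\<bar> \<le> t}"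
proof -
  have A: "{x::real. \<bar>x\<bar> \<le> t} \<in> sets borel" by measurable
  have eq: "prob {\<omega>\<in>space M. \<bar>X k \<omega>\<bar> \<le> t} = measure (distr M borel (X k)) {x. \<bar>x\<bar> \<le> t}"
    if "k \<ge> 1" for k
  proof -
    have "X k \<in> measurable M borel" using meas that by simp
    from measure_distr[OF this A] show ?thesis
      by (simp add: vimage_def Int_def conj_commute)
  qed
  have "prob {\<omega>\<in>space M. \<bar>X i \<omega>\<bar> \<le> t} = measure (distr M borel (X i)) {x. \<bar>x\<bar> \<le> t}"
    by (rule eq[OF assms])
  also have "\<dots> = measure (distr M borel (X 1)) {x. \<bar>x\<bar> \<le> t}" by (simp only: dis[OF assms])
  also have "\<dots> = prob {\<omega>\<in>space M. \<bar>X 1 \<omega>\<bar> \<le> t}" by (rule eq[symmetric]) simp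
  finally show ?thesis .
qed

lemma prob_all:
  assumes "g \<ge> 1"
  shows "prob {\<omega>\<in>space M. \<forall>i\<in>{1..g}. \<bar>X i \<omega>\<bar> \<le> t} = (prob {\<omega>\<in>space M. \<bar>X 1 \<omega>\<bar> \<le> t})^g"
proof -
  have A: "{x::real. \<bar>x\<bar> \<le> t} \<in> sets borel" by measurable
  have e1: "\<And>i. X i -` {x. \<bar>x\<bar> \<le> t} \<inter> space M = {\<omega>\<in>space M. \<bar>X i \<omega>\<bar> \<le> t}" by blast
  have "prob (\<Inter>i\<in>{1..g}. X i -` {x. \<bar>x\<bar> \<le> t} \<inter> space M) = (\<Prod>i\<in>{1..g}. prob (X i -` {x. \<bar>x\<bar> \<le> t} \<inter> space M))"
  proof (rule indep_varsD[OF ind])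
    show "{1..g} \<noteq> {}" using assms by simp
  qed (simp_all add: A subset_eq)
  also have "\<dots> = (\<Prod>i\<in>{1..g}. prob {\<omega>\<in>space M. \<bar>X 1 \<omega>\<bar> \<le> t})"
  proof (rule prod.cong[OF refl])
    fix i assume "i \<in> {1..g}"
    then have "i \<ge> 1" by simp
    then show "prob (X i -` {x. \<bar>x\<bar> \<le> t} \<inter> space M) = prob {\<omega>\<in>space M. \<bar>X 1 \<omega>\<bar> \<le> t}"
      unfolding e1 by (rule prob_i)
  qed
  also have "\<dots> = (prob {\<omega>\<in>space M. \<bar>X 1 \<omega>\<bar> \<le> t})^g" by simp
  also have "(\<Inter>i\<in>{1..g}. X i -` {x. \<bar>x\<bar> \<le> t} \<inter> space M) = {\<omega>\<in>space M. \<forall>i\<in>{1..g}. \<bar>X i \<omega>\<bar> \<le> t}"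
    using assms by auto
  finally show ?thesis .
qed

end



context blk begin

definition Mg :: "nat \<Rightarrow> 'a \<Rightarrow> real" where "Mg g \<omega> = block_max g (\<lambda>i. X i \<omega>)"
definition LL :: "(nat \<Rightarrow> real) \<Rightarrow> nat \<Rightarrow> 'a \<Rightarrow> real" where
  "LL B g \<omega> = block_loss B g (\<lambda>i. X i \<omega>)"

lemma LL_eq: "LL B g \<omega> = (1 / real g) * (\<Sum>i=1..g. phi B (Mg g \<omega>) \<bar>X i \<omega>\<bar>)"
  unfolding LL_def Mg_def by (rule loss_eq)

lemma Mg_meas: "Mg g \<in> borel_measurable M"
  unfolding Mg_def block_max_def
  by (rule borel_measurable_Max) (auto intro!: borel_measurable_abs meas)

lemma phi_meas:
  assumes "F \<in> borel_measurable M" "G \<in> borel_measurable M"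
  shows "(\<lambda>\<omega>. phi B (F \<omega>) (G \<omega>)) \<in> borel_measurable M"
  unfolding phi_def
  by (rule borel_measurable_Min) (use assms in auto)

lemma LL_meas: "LL B g \<in> borel_measurable M"
  unfolding LL_eq[abs_def]
  by (intro borel_measurable_times borel_measurable_const borel_measurable_sum phi_meas Mg_meas
      borel_measurable_abs meas) simp

lemma LL_nonneg: "B \<in> grids \<Longrightarrow> 0 \<le> LL B g \<omega>"
  unfolding LL_eq by (intro mult_nonneg_nonneg sum_nonneg phi_bounds(1)) auto

lemma Mg_ae: assumes g: "g \<ge> 1" shows "AE \<omega> in M. 0 \<le> Mg g \<omega> \<and> Mg g \<omega> \<le> xm \<and> (\<forall>i\<in>{1..g}. \<bar>X i \<omega>\<bar> \<le> xm)"
proof (rule eventually_mono[OF xm_ae_all])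
  fix \<omega> assume h: "\<forall>i\<in>{1..g}. \<bar>X i \<omega>\<bar> \<le> xm"
  show "0 \<le> Mg g \<omega> \<and> Mg g \<omega> \<le> xm \<and> (\<forall>i\<in>{1..g}. \<bar>X i \<omega>\<bar> \<le> xm)"
    unfolding Mg_def using block_max_props(2)[OF g, of "\<lambda>i. X i \<omega>"] block_max_le[OF g, of "\<lambda>i. X i \<omega>" xm] h by auto
qed

lemma LL_ae: assumes "g \<ge> 1" "B \<in> grids" shows "AE \<omega> in M. LL B g \<omega> \<le> xm^2"
proof (rule eventually_mono[OF Mg_ae[OF assms(1)]])
  fix \<omega> assume h: "0 \<le> Mg g \<omega> \<and> Mg g \<omega> \<le> xm \<and> (\<forall>i\<in>{1..g}. \<bar>X i \<omega>\<bar> \<le> xm)"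
  have "(\<Sum>i=1..g. phi B (Mg g \<omega>) \<bar>X i \<omega>\<bar>) \<le> (\<Sum>i=1..g. xm^2)"
  proof (rule sum_mono)
    fix i assume i: "i \<in> {1..g}"
    have "phi B (Mg g \<omega>) \<bar>X i \<omega>\<bar> \<le> \<bar>X i \<omega>\<bar>^2" by (rule phi_bounds(2)[OF assms(2)]) simp
    also have "\<dots> \<le> xm^2" using h i by (intro power_mono) auto
    finally show "phi B (Mg g \<omega>) \<bar>X i \<omega>\<bar> \<le> xm^2" .
  qed
  then show "LL B g \<omega> \<le> xm^2" unfolding LL_eq using assms(1)
    by (simp add: field_simps)
qed

lemma LL_int: assumes "g \<ge> 1" "B \<in> grids" shows "integrable M (LL B g)"
proof (rule integrable_const_bound[OF _ LL_meas])
  show "AE \<omega> in M. norm (LL B g \<omega>) \<le> xm^2"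
    using LL_ae[OF assms] by (rule eventually_mono) (simp add: LL_nonneg[OF assms(2)])
qed

lemma Mg_int: "integrable M (Mg g)" if "g \<ge> 1"
proof (rule integrable_const_bound[OF _ Mg_meas])
  show "AE \<omega> in M. norm (Mg g \<omega>) \<le> xm"
    using Mg_ae[OF that] by (rule eventually_mono) simp
qed

end



context blk begin

definition hh :: "(nat \<Rightarrow> real) \<Rightarrow> real \<Rightarrow> real" where
  "hh B x = phi B xm (min \<bar>x\<bar> xm)"

definition mu :: "(nat \<Rightarrow> real) \<Rightarrow> real" where
  "mu B = (\<integral>\<omega>. hh B (X 1 \<omega>) \<partial>M)"

definition W :: "(nat \<Rightarrow> real) \<Rightarrow> nat \<Rightarrow> 'a \<Rightarrow> real" where
  "W B i \<omega> = hh B (X i \<omega>) - mu B"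

lemma int_const: "(\<integral>\<omega>. c \<partial>M) = (c::real)"
  by (simp add: prob_space)

lemma hh_bounds: assumes "B \<in> grids" shows "0 \<le> hh B x" "hh B x \<le> xm^2"
proof -
  have z: "0 \<le> min \<bar>x\<bar> xm" using xm_nonneg by simp
  show "0 \<le> hh B x" unfolding hh_def by (rule phi_bounds(1)[OF assms z])
  have "hh B x \<le> (min \<bar>x\<bar> xm)^2" unfolding hh_def by (rule phi_bounds(2)[OF assms z])
  also have "\<dots> \<le> xm^2" using z by (intro power_mono) auto
  finally show "hh B x \<le> xm^2" .
qed

lemma hh_meas: "hh B \<in> borel_measurable borel"
  unfolding hh_def phi_def
  by (rule borel_measurable_Min) auto

lemma hX_meas: "i \<ge> 1 \<Longrightarrow> (\<lambda>\<omega>. hh B (X i \<omega>)) \<in> borel_measurable M"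
  using measurable_compose[OF meas hh_meas] by simp

lemma hX_int: assumes "i \<ge> 1" "B \<in> grids" shows "integrable M (\<lambda>\<omega>. hh B (X i \<omega>))"
  by (rule integrable_const_bound[where B="xm^2", OF _ hX_meas[OF assms(1)]])
     (simp add: hh_bounds[OF assms(2)])

lemma E_hX: assumes "i \<ge> 1" shows "(\<integral>\<omega>. hh B (X i \<omega>) \<partial>M) = mu B"
proof -
  have mi: "X i \<in> measurable M borel" using meas assms by simp
  have m1: "X 1 \<in> measurable M borel" using meas by simp
  have "(\<integral>\<omega>. hh B (X i \<omega>) \<partial>M) = integral\<^sup>L (distr M borel (X i)) (hh B)"
    by (rule integral_distr[OF mi hh_meas, symmetric])
  also have "\<dots> = integral\<^sup>L (distr M borel (X 1)) (hh B)" by (simp only: dis[OF assms])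
  also have "\<dots> = mu B" unfolding mu_def by (rule integral_distr[OF m1 hh_meas])
  finally show ?thesis .
qed

lemma mu_bounds: assumes "B \<in> grids" shows "0 \<le> mu B" "mu B \<le> xm^2"
proof -
  show "0 \<le> mu B" unfolding mu_def by (rule integral_nonneg_AE) (simp add: hh_bounds[OF assms])
  have "mu B \<le> (\<integral>\<omega>. xm^2 \<partial>M)" unfolding mu_def
    by (rule integral_mono[OF hX_int[OF _ assms]]) (simp_all add: hh_bounds[OF assms])
  then show "mu B \<le> xm^2" by (simp add: prob_space)
qed

lemma W_bound: "B \<in> grids \<Longrightarrow> \<bar>W B i \<omega>\<bar> \<le> xm^2"
  unfolding W_def using hh_bounds[of B "X i \<omega>"] mu_bounds[of B] by auto

lemma W_meas: "i \<ge> 1 \<Longrightarrow> W B i \<in> borel_measurable M"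
  unfolding W_def[abs_def] by (intro borel_measurable_diff hX_meas borel_measurable_const)

lemma W_int: "i \<ge> 1 \<Longrightarrow> B \<in> grids \<Longrightarrow> integrable M (W B i)"
  by (rule integrable_const_bound[where B="xm^2", OF _ W_meas]) (simp_all add: W_bound)

lemma WW_int: "i \<ge> 1 \<Longrightarrow> k \<ge> 1 \<Longrightarrow> B \<in> grids \<Longrightarrow> integrable M (\<lambda>\<omega>. W B i \<omega> * W B k \<omega>)"
proof (rule integrable_const_bound[where B="xm^2 * xm^2"])
  assume "i \<ge> 1" "k \<ge> 1" "B \<in> grids"
  show "AE \<omega> in M. norm (W B i \<omega> * W B k \<omega>) \<le> xm^2 * xm^2"
  proof (rule AE_I2)
    fix \<omega>
    have "\<bar>W B i \<omega>\<bar> * \<bar>W B k \<omega>\<bar> \<le> xm^2 * xm^2"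
      by (rule mult_mono) (auto simp: W_bound[OF \<open>B \<in> grids\<close>])
    then show "norm (W B i \<omega> * W B k \<omega>) \<le> xm^2 * xm^2" by (simp only: real_norm_def abs_mult)
  qed
  show "(\<lambda>\<omega>. W B i \<omega> * W B k \<omega>) \<in> borel_measurable M"
    using W_meas \<open>i \<ge> 1\<close> \<open>k \<ge> 1\<close> by (intro borel_measurable_times) auto
qed

lemma E_W: "i \<ge> 1 \<Longrightarrow> B \<in> grids \<Longrightarrow> (\<integral>\<omega>. W B i \<omega> \<partial>M) = 0"
  unfolding W_def by (simp add: hX_int E_hX prob_space)

lemma E_WW: assumes "i \<ge> 1" "k \<ge> 1" "i \<noteq> k" "B \<in> grids"
  shows "(\<integral>\<omega>. W B i \<omega> * W B k \<omega> \<partial>M) = 0"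
proof -
  have "indep_vars (\<lambda>_. borel) X {i, k}"
    using indep_vars_subset[OF ind, of "{i,k}"] assms by auto
  then have ind2: "indep_vars (\<lambda>_. borel) (\<lambda>j \<omega>. (\<lambda>x. hh B x - mu B) (X j \<omega>)) {i, k}"
    by (rule indep_vars_compose2) (intro borel_measurable_diff hh_meas borel_measurable_const)
  have "(\<integral>\<omega>. (\<Prod>j\<in>{i,k}. W B j \<omega>) \<partial>M) = (\<Prod>j\<in>{i,k}. \<integral>\<omega>. W B j \<omega> \<partial>M)"
  proof (rule indep_vars_lebesgue_integral)
    show "indep_vars (\<lambda>_. borel) (W B) {i, k}" using ind2 unfolding W_def[abs_def] .
    show "\<And>j. j \<in> {i, k} \<Longrightarrow> integrable M (W B j)" using assms W_int by auto
  qed simp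
  then show ?thesis using assms by (simp add: E_W)
qed

lemma E_sq: assumes "B \<in> grids"
  shows "(\<integral>\<omega>. (\<Sum>i=1..g. W B i \<omega>)^2 \<partial>M) \<le> real g * xm^4"
proof -
  have "(\<integral>\<omega>. (\<Sum>i=1..g. W B i \<omega>)^2 \<partial>M) = (\<integral>\<omega>. (\<Sum>i=1..g. \<Sum>k=1..g. W B i \<omega> * W B k \<omega>) \<partial>M)"
    by (simp add: power2_eq_square sum_product)
  also have "\<dots> = (\<Sum>i=1..g. \<integral>\<omega>. (\<Sum>k=1..g. W B i \<omega> * W B k \<omega>) \<partial>M)"
  proof (rule Bochner_Integration.integral_sum)
    fix i assume "i \<in> {1..g}"
    then have h: "1 \<le> i" by simp
    show "integrable M (\<lambda>\<omega>. \<Sum>k=1..g. W B i \<omega> * W B k \<omega>)"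
      by (rule Bochner_Integration.integrable_sum, rule WW_int[OF h _ assms]) simp
  qed
  also have "\<dots> = (\<Sum>i=1..g. \<Sum>k=1..g. \<integral>\<omega>. W B i \<omega> * W B k \<omega> \<partial>M)"
  proof (intro sum.cong refl Bochner_Integration.integral_sum)
    fix i k assume "i \<in> {1..g}" "k \<in> {1..g}"
    then have h: "1 \<le> i" "1 \<le> k" by simp_all
    show "integrable M (\<lambda>\<omega>. W B i \<omega> * W B k \<omega>)"
      by (rule WW_int[OF h assms])
  qed
  also have "\<dots> = (\<Sum>i=1..g. \<integral>\<omega>. W B i \<omega> * W B i \<omega> \<partial>M)"
  proof (rule sum.cong[OF refl])
    fix i assume i: "i \<in> {1..g}"
    have "(\<Sum>k=1..g. \<integral>\<omega>. W B i \<omega> * W B k \<omega> \<partial>M) =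
        (\<Sum>k=1..g. if k = i then \<integral>\<omega>. W B i \<omega> * W B i \<omega> \<partial>M else 0)"
      using i assms by (intro sum.cong refl) (auto simp: E_WW)
    also have "\<dots> = \<integral>\<omega>. W B i \<omega> * W B i \<omega> \<partial>M" using i by simp
    finally show "(\<Sum>k=1..g. \<integral>\<omega>. W B i \<omega> * W B k \<omega> \<partial>M) = \<integral>\<omega>. W B i \<omega> * W B i \<omega> \<partial>M" .
  qed
  also have "\<dots> \<le> (\<Sum>i=1..g. xm^4)"
  proof (rule sum_mono)
    fix i assume i: "i \<in> {1..g}"
    have "(\<integral>\<omega>. W B i \<omega> * W B i \<omega> \<partial>M) \<le> (\<integral>\<omega>. xm^2 * xm^2 \<partial>M)"
    proof (rule integral_mono[OF WW_int])
      fix \<omega>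
      have "\<bar>W B i \<omega>\<bar> * \<bar>W B i \<omega>\<bar> \<le> xm^2 * xm^2"
        by (rule mult_mono) (auto simp: W_bound[OF assms])
      then show "W B i \<omega> * W B i \<omega> \<le> xm^2 * xm^2" by (simp only: abs_mult_self_eq)
    qed (use i assms in auto)
    then show "(\<integral>\<omega>. W B i \<omega> * W B i \<omega> \<partial>M) \<le> xm^4" by (simp add: prob_space power4_eq_xxxx power2_eq_square mult.assoc)
  qed
  finally show ?thesis by simp
qed

end



context blk begin

lemma S_int: assumes "B \<in> grids"
  shows "integrable M (\<lambda>\<omega>. \<Sum>i=1..g. W B i \<omega>)"
  by (rule Bochner_Integration.integrable_sum, rule W_int[OF _ assms]) simp

lemma S2_int: assumes "B \<in> grids"
  shows "integrable M (\<lambda>\<omega>. (\<Sum>i=1..g. W B i \<omega>)^2)"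
proof (rule integrable_const_bound[where B="(real g * xm^2)^2"])
  show "(\<lambda>\<omega>. (\<Sum>i=1..g. W B i \<omega>)^2) \<in> borel_measurable M"
    by (intro borel_measurable_power borel_measurable_sum W_meas) simp
  show "AE \<omega> in M. norm ((\<Sum>i=1..g. W B i \<omega>)^2) \<le> (real g * xm^2)^2"
  proof (rule AE_I2)
    fix \<omega>
    have "\<bar>\<Sum>i=1..g. W B i \<omega>\<bar> \<le> (\<Sum>i=1..g. \<bar>W B i \<omega>\<bar>)" by (rule sum_abs)
    also have "\<dots> \<le> (\<Sum>i=1..g. xm^2)" by (intro sum_mono W_bound[OF assms])
    finally have "\<bar>\<Sum>i=1..g. W B i \<omega>\<bar> \<le> real g * xm^2" by simp
    then have "\<bar>\<Sum>i=1..g. W B i \<omega>\<bar>^2 \<le> (real g * xm^2)^2" by (intro power_mono) auto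
    then show "norm ((\<Sum>i=1..g. W B i \<omega>)^2) \<le> (real g * xm^2)^2" by simp
  qed
qed

lemma abs_le_quad: "0 < d \<Longrightarrow> \<bar>t::real\<bar> \<le> d / 2 + t^2 / (2 * d)"
proof -
  assume d: "0 < d"
  have "0 \<le> (\<bar>t\<bar> - d)^2" by simp
  then have "2 * d * \<bar>t\<bar> \<le> d^2 + t^2" by (simp add: power2_eq_square algebra_simps)
  then show ?thesis using d by (simp add: field_simps power2_eq_square)
qed

lemma K3: assumes "g \<ge> 1" "d > 0" "B \<in> grids"
  shows "(\<integral>\<omega>. \<bar>(1 / real g) * (\<Sum>i=1..g. W B i \<omega>)\<bar> \<partial>M) \<le> d / 2 + xm^4 / (2 * d * real g)"
proof -
  let ?S = "\<lambda>\<omega>. \<Sum>i=1..g. W B i \<omega>"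
  have g: "real g > 0" using assms by simp
  have pw: "\<bar>(1 / real g) * ?S \<omega>\<bar> \<le> d / 2 + (1 / (2 * d * real g ^ 2)) * (?S \<omega>)^2" for \<omega>
  proof -
    have "\<bar>(1 / real g) * ?S \<omega>\<bar> \<le> d / 2 + ((1 / real g) * ?S \<omega>)^2 / (2 * d)"
      by (rule abs_le_quad[OF assms(2)])
    also have "((1 / real g) * ?S \<omega>)^2 / (2 * d) = (1 / (2 * d * real g ^ 2)) * (?S \<omega>)^2"
      using g assms(2) by (simp add: field_simps power2_eq_square)
    finally show ?thesis .
  qed
  have "(\<integral>\<omega>. \<bar>(1 / real g) * ?S \<omega>\<bar> \<partial>M) \<le> (\<integral>\<omega>. d / 2 + (1 / (2 * d * real g ^ 2)) * (?S \<omega>)^2 \<partial>M)"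
    by (rule integral_mono)
      (use pw S_int[OF assms(3)] S2_int[OF assms(3)] in auto)
  also have "\<dots> = d / 2 + (1 / (2 * d * real g ^ 2)) * (\<integral>\<omega>. (?S \<omega>)^2 \<partial>M)"
    using S2_int[OF assms(3)] by (simp add: prob_space)
  also have "\<dots> \<le> d / 2 + (1 / (2 * d * real g ^ 2)) * (real g * xm^4)"
    using E_sq[OF assms(3), of g] assms(2) g by (intro add_left_mono mult_left_mono) auto
  also have "\<dots> = d / 2 + xm^4 / (2 * d * real g)"
    using g by (simp add: field_simps power2_eq_square)
  finally show ?thesis .
qed

definition qq :: "real \<Rightarrow> real" where "qq e = prob {\<omega>\<in>space M. \<bar>X 1 \<omega>\<bar> \<le> xm - e}"

lemma K2: assumes "g \<ge> 1" "e > 0"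
  shows "(\<integral>\<omega>. xm - Mg g \<omega> \<partial>M) \<le> e + xm * (qq e)^g"
proof -
  define S where "S = {\<omega>\<in>space M. \<forall>i\<in>{1..g}. \<bar>X i \<omega>\<bar> \<le> xm - e}"
  have Ssets: "S \<in> sets M" unfolding S_def
  proof (intro sets.sets_Collect_finite_All)
    fix i assume "i \<in> {1..g}"
    then have [measurable]: "X i \<in> borel_measurable M" using meas by simp
    show "{\<omega> \<in> space M. \<bar>X i \<omega>\<bar> \<le> xm - e} \<in> sets M" by measurable
  qed simp
  have pS: "prob S = (qq e)^g" unfolding S_def qq_def by (rule prob_all[OF assms(1)])
  have pw: "AE \<omega> in M. xm - Mg g \<omega> \<le> e + xm * indicator S \<omega>"
  proof (rule eventually_mono[OF eventually_conj[OF Mg_ae[OF assms(1)] AE_space]])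
    fix \<omega> assume h: "(0 \<le> Mg g \<omega> \<and> Mg g \<omega> \<le> xm \<and> (\<forall>i\<in>{1..g}. \<bar>X i \<omega>\<bar> \<le> xm)) \<and> \<omega> \<in> space M"
    show "xm - Mg g \<omega> \<le> e + xm * indicator S \<omega>"
    proof (cases "\<omega> \<in> S")
      case True then show ?thesis using h assms by simp
    next
      case False
      with h obtain i where i: "i \<in> {1..g}" "\<bar>X i \<omega>\<bar> > xm - e" unfolding S_def by auto
      have "\<bar>X i \<omega>\<bar> \<le> Mg g \<omega>" unfolding Mg_def by (rule block_max_props(1)[OF assms(1) i(1)])
      then show ?thesis using i False xm_nonneg by simp
    qed
  qed
  have fin: "emeasure M S < \<infinity>" by (simp add: emeasure_eq_measure)
  have Iint: "integrable M (\<lambda>\<omega>. xm * indicator S \<omega> :: real)"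
    by (intro Bochner_Integration.integrable_mult_right integrable_real_indicator Ssets fin)
  have "(\<integral>\<omega>. xm - Mg g \<omega> \<partial>M) \<le> (\<integral>\<omega>. e + xm * indicator S \<omega> \<partial>M)"
  proof (rule integral_mono_AE[OF _ _ pw])
    show "integrable M (\<lambda>\<omega>. xm - Mg g \<omega>)" using Mg_int[OF assms(1)] by simp
    have "emeasure M S < \<infinity>" by (simp add: emeasure_eq_measure)
    then show "integrable M (\<lambda>\<omega>. e + xm * indicator S \<omega>)"
      by (intro Bochner_Integration.integrable_add integrable_const Bochner_Integration.integrable_mult_right
           integrable_real_indicator Ssets)
  qed
  also have "\<dots> = e + xm * prob S"
  proof -
    have "(\<integral>\<omega>. e + xm * indicator S \<omega> \<partial>M) = (\<integral>\<omega>. e \<partial>M) + (\<integral>\<omega>. xm * indicator S \<omega> \<partial>M)"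
      by (rule Bochner_Integration.integral_add[OF integrable_const Iint])
    also have "(\<integral>\<omega>. xm * indicator S \<omega> \<partial>M) = xm * (\<integral>\<omega>. indicator S \<omega> \<partial>M)"
      by (rule Bochner_Integration.integral_mult_right) (rule integrable_real_indicator[OF Ssets fin])
    also have "(\<integral>\<omega>. indicator S \<omega> \<partial>M) = prob S"
      using Ssets sets.sets_into_space[OF Ssets] by (simp add: Int_absorb2)
    finally show ?thesis by (simp add: prob_space)
  qed
  finally show ?thesis using pS by simp
qed


end



context blk begin

lemma K1_pw:
  assumes g: "g \<ge> 1" and B: "B \<in> grids"
    and h: "0 \<le> Mg g \<omega> \<and> Mg g \<omega> \<le> xm \<and> (\<forall>i\<in>{1..g}. \<bar>X i \<omega>\<bar> \<le> xm)"
  shows "\<bar>LL B g \<omega> - mu B\<bar> \<le> 2 * xm * (xm - Mg g \<omega>) + \<bar>(1 / real g) * (\<Sum>i=1..g. W B i \<omega>)\<bar>"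
proof -
  have gp: "real g > 0" using g by simp
  have "(\<Sum>i=1..g. W B i \<omega>) = (\<Sum>i=1..g. phi B xm \<bar>X i \<omega>\<bar> - mu B)"
  proof (rule sum.cong[OF refl])
    fix i assume "i \<in> {1..g}"
    then have "min \<bar>X i \<omega>\<bar> xm = \<bar>X i \<omega>\<bar>" using h by auto
    then show "W B i \<omega> = phi B xm \<bar>X i \<omega>\<bar> - mu B" unfolding W_def hh_def by simp
  qed
  also have "\<dots> = (\<Sum>i=1..g. phi B xm \<bar>X i \<omega>\<bar>) - real g * mu B"
    by (simp add: sum_subtractf)
  finally have e1: "(1 / real g) * (\<Sum>i=1..g. W B i \<omega>) = (1 / real g) * (\<Sum>i=1..g. phi B xm \<bar>X i \<omega>\<bar>) - mu B"
    using gp by (simp add: field_simps)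
  have "\<bar>(\<Sum>i=1..g. phi B (Mg g \<omega>) \<bar>X i \<omega>\<bar>) - (\<Sum>i=1..g. phi B xm \<bar>X i \<omega>\<bar>)\<bar>
      = \<bar>\<Sum>i=1..g. phi B (Mg g \<omega>) \<bar>X i \<omega>\<bar> - phi B xm \<bar>X i \<omega>\<bar>\<bar>"
    by (simp add: sum_subtractf)
  also have "\<dots> \<le> (\<Sum>i=1..g. \<bar>phi B (Mg g \<omega>) \<bar>X i \<omega>\<bar> - phi B xm \<bar>X i \<omega>\<bar>\<bar>)" by (rule sum_abs)
  also have "\<dots> \<le> (\<Sum>i=1..g. 2 * xm * (xm - Mg g \<omega>))"
  proof (rule sum_mono)
    fix i assume "i \<in> {1..g}"
    then show "\<bar>phi B (Mg g \<omega>) \<bar>X i \<omega>\<bar> - phi B xm \<bar>X i \<omega>\<bar>\<bar> \<le> 2 * xm * (xm - Mg g \<omega>)"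
      using h by (intro phi_lip[OF B]) auto
  qed
  also have "\<dots> = real g * (2 * xm * (xm - Mg g \<omega>))" by simp
  finally have PQ: "\<bar>(\<Sum>i=1..g. phi B (Mg g \<omega>) \<bar>X i \<omega>\<bar>) - (\<Sum>i=1..g. phi B xm \<bar>X i \<omega>\<bar>)\<bar> \<le> real g * (2 * xm * (xm - Mg g \<omega>))" .
  have "\<bar>LL B g \<omega> - (1 / real g) * (\<Sum>i=1..g. phi B xm \<bar>X i \<omega>\<bar>)\<bar>
      = (1 / real g) * \<bar>(\<Sum>i=1..g. phi B (Mg g \<omega>) \<bar>X i \<omega>\<bar>) - (\<Sum>i=1..g. phi B xm \<bar>X i \<omega>\<bar>)\<bar>"
    unfolding LL_eq using gp by (simp only: right_diff_distrib[symmetric] abs_mult) simp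
  also have "\<dots> \<le> (1 / real g) * (real g * (2 * xm * (xm - Mg g \<omega>)))"
    using PQ gp by (intro mult_left_mono) auto
  also have "\<dots> = 2 * xm * (xm - Mg g \<omega>)" using gp by simp
  finally have e2: "\<bar>LL B g \<omega> - (1 / real g) * (\<Sum>i=1..g. phi B xm \<bar>X i \<omega>\<bar>)\<bar> \<le> 2 * xm * (xm - Mg g \<omega>)" .
  show ?thesis using e1 e2 by linarith
qed

lemma Ebound:
  assumes g: "g \<ge> 1" and B: "B \<in> grids" and eta: "\<eta> > 0" and d: "d > 0"
  shows "(\<integral>\<omega>. \<bar>LL B g \<omega> - mu B\<bar> \<partial>M) \<le> 2 * xm * (\<eta> + xm * (qq \<eta>)^g) + (d / 2 + xm^4 / (2 * d * real g))"
proof -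
  let ?Y = "\<lambda>\<omega>. \<bar>(1 / real g) * (\<Sum>i=1..g. W B i \<omega>)\<bar>"
  have Yint: "integrable M ?Y"
    by (intro integrable_abs Bochner_Integration.integrable_mult_right S_int[OF B])
  have Mint: "integrable M (\<lambda>\<omega>. 2 * xm * (xm - Mg g \<omega>))"
    using Mg_int[OF g] by simp
  have "(\<integral>\<omega>. \<bar>LL B g \<omega> - mu B\<bar> \<partial>M) \<le> (\<integral>\<omega>. 2 * xm * (xm - Mg g \<omega>) + ?Y \<omega> \<partial>M)"
  proof (rule integral_mono_AE)
    show "integrable M (\<lambda>\<omega>. \<bar>LL B g \<omega> - mu B\<bar>)" using LL_int[OF g B] by simp
    show "integrable M (\<lambda>\<omega>. 2 * xm * (xm - Mg g \<omega>) + ?Y \<omega>)"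
      by (rule Bochner_Integration.integrable_add[OF Mint Yint])
    show "AE \<omega> in M. \<bar>LL B g \<omega> - mu B\<bar> \<le> 2 * xm * (xm - Mg g \<omega>) + ?Y \<omega>"
      by (rule eventually_mono[OF Mg_ae[OF g]]) (rule K1_pw[OF g B])
  qed
  also have "\<dots> = 2 * xm * (\<integral>\<omega>. xm - Mg g \<omega> \<partial>M) + (\<integral>\<omega>. ?Y \<omega> \<partial>M)"
  proof -
    have "(\<integral>\<omega>. 2 * xm * (xm - Mg g \<omega>) + ?Y \<omega> \<partial>M) = (\<integral>\<omega>. 2 * xm * (xm - Mg g \<omega>) \<partial>M) + (\<integral>\<omega>. ?Y \<omega> \<partial>M)"
      by (rule Bochner_Integration.integral_add[OF Mint Yint])
    moreover have "(\<integral>\<omega>. 2 * xm * (xm - Mg g \<omega>) \<partial>M) = 2 * xm * (\<integral>\<omega>. xm - Mg g \<omega> \<partial>M)"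
      by (rule Bochner_Integration.integral_mult_right) (use Mg_int[OF g] in simp)
    ultimately show ?thesis by simp
  qed
  also have "\<dots> \<le> 2 * xm * (\<eta> + xm * (qq \<eta>)^g) + (d / 2 + xm^4 / (2 * d * real g))"
    using K2[OF g eta] K3[OF g d B] xm_nonneg
    by (intro add_mono mult_left_mono) auto
  finally show ?thesis .
qed

end



context blk begin

lemma unif:
  assumes e: "e > 0"
  shows "eventually (\<lambda>g. g \<ge> 1 \<and> (\<forall>B\<in>grids. (\<integral>\<omega>. \<bar>LL B g \<omega> - mu B\<bar> \<partial>M) \<le> e)) sequentially"
proof -
  define \<eta> where "\<eta> = e / (8 * (xm + 1))"
  define d where "d = e / 2"
  have eta: "\<eta> > 0" unfolding \<eta>_def using e xm_nonneg by simp
  have d: "d > 0" unfolding d_def using e by simp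
  have q0: "0 \<le> qq \<eta>" unfolding qq_def by simp
  have q1: "qq \<eta> < 1" unfolding qq_def by (rule xm_sharp[OF eta])
  have T1: "(\<lambda>g. 2 * xm * (xm * (qq \<eta>)^g)) \<longlonglongrightarrow> 0"
  proof -
    have "(\<lambda>g. (qq \<eta>)^g) \<longlonglongrightarrow> 0" using q0 q1 by (intro LIMSEQ_power_zero) simp
    from tendsto_mult[OF tendsto_const[of "2 * xm * xm"] this] show ?thesis
      by (simp add: mult.assoc)
  qed
  have T2: "(\<lambda>g. xm^4 / (2 * d * real g)) \<longlonglongrightarrow> 0"
  proof -
    have "(\<lambda>g. (xm^4 / (2 * d)) / real g) \<longlonglongrightarrow> 0" by (rule lim_const_over_n)
    then show ?thesis by (simp add: field_simps)
  qed
  have ev1: "eventually (\<lambda>g. 2 * xm * (xm * (qq \<eta>)^g) < e / 4) sequentially"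
    by (rule order_tendstoD(2)[OF T1]) (use e in simp)
  have ev2: "eventually (\<lambda>g. xm^4 / (2 * d * real g) < e / 4) sequentially"
    by (rule order_tendstoD(2)[OF T2]) (use e in simp)
  have ev3: "eventually (\<lambda>g. g \<ge> (1::nat)) sequentially" by (rule eventually_ge_at_top)
  have c1: "2 * xm * \<eta> \<le> e / 4"
  proof -
    have "2 * xm * \<eta> = (e / 4) * (xm / (xm + 1))" unfolding \<eta>_def using xm_nonneg
      by (simp add: field_simps)
    also have "\<dots> \<le> (e / 4) * 1" using e xm_nonneg by (intro mult_left_mono) auto
    finally show ?thesis by simp
  qed
  show ?thesis
  proof (rule eventually_mono[OF eventually_conj[OF ev3 eventually_conj[OF ev1 ev2]]])
    fix g :: nat
    assume h: "1 \<le> g \<and> 2 * xm * (xm * qq \<eta> ^ g) < e / 4 \<and> xm ^ 4 / (2 * d * real g) < e / 4"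
    show "g \<ge> 1 \<and> (\<forall>B\<in>grids. (\<integral>\<omega>. \<bar>LL B g \<omega> - mu B\<bar> \<partial>M) \<le> e)"
    proof (intro conjI ballI)
      show "g \<ge> 1" using h by simp
      fix B assume B: "B \<in> grids"
      have "(\<integral>\<omega>. \<bar>LL B g \<omega> - mu B\<bar> \<partial>M) \<le> 2 * xm * (\<eta> + xm * (qq \<eta>)^g) + (d / 2 + xm^4 / (2 * d * real g))"
        using h by (intro Ebound B eta d) simp
      also have "\<dots> = 2 * xm * \<eta> + 2 * xm * (xm * (qq \<eta>)^g) + d / 2 + xm^4 / (2 * d * real g)"
        by (simp add: algebra_simps)
      also have "\<dots> \<le> e" using h c1 unfolding d_def by linarith
      finally show "(\<integral>\<omega>. \<bar>LL B g \<omega> - mu B\<bar> \<partial>M) \<le> e" .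
    qed
  qed
qed

lemma grids_ne: "grids \<noteq> {}"
proof -
  have "(\<lambda>j::nat. if j = 7 then 1 else 0 :: real) \<in> grids" unfolding grids_def by auto
  then show ?thesis by blast
qed

lemma EL_nonneg: "B \<in> grids \<Longrightarrow> 0 \<le> (\<integral>\<omega>. LL B g \<omega> \<partial>M)"
  by (rule integral_nonneg_AE) (simp add: LL_nonneg)

lemma Rstar_eq: "R_star M X g = (INF B\<in>grids. (\<integral>\<omega>. LL B g \<omega> \<partial>M))"
  unfolding R_star_def LL_def by simp

lemma RPO2_eq: "R_PO2 M X g = (INF BB\<in>grids \<times> grids. (\<integral>\<omega>. min (LL (fst BB) g \<omega>) (LL (snd BB) g \<omega>) \<partial>M))"
  unfolding R_PO2_def LL_def by simp

lemma bdd1: "bdd_below ((\<lambda>B. (\<integral>\<omega>. LL B g \<omega> \<partial>M)) ` grids)"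
  by (rule bdd_belowI[of _ 0]) (auto simp: EL_nonneg)

lemma bdd2: "bdd_below ((\<lambda>BB. (\<integral>\<omega>. min (LL (fst BB) g \<omega>) (LL (snd BB) g \<omega>) \<partial>M)) ` (grids \<times> grids))"
proof (rule bdd_belowI[of _ 0])
  fix y assume "y \<in> (\<lambda>BB. (\<integral>\<omega>. min (LL (fst BB) g \<omega>) (LL (snd BB) g \<omega>) \<partial>M)) ` (grids \<times> grids)"
  then obtain B1 B2 where b: "B1 \<in> grids" "B2 \<in> grids"
    and y: "y = (\<integral>\<omega>. min (LL B1 g \<omega>) (LL B2 g \<omega>) \<partial>M)" by auto
  show "0 \<le> y" unfolding y by (rule integral_nonneg_AE) (simp add: LL_nonneg b)
qed

lemma PO2_le: "R_PO2 M X g \<le> R_star M X g"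
  unfolding Rstar_eq
proof (rule cINF_greatest[OF grids_ne])
  fix B assume B: "B \<in> grids"
  have "R_PO2 M X g \<le> (\<integral>\<omega>. min (LL (fst (B, B)) g \<omega>) (LL (snd (B, B)) g \<omega>) \<partial>M)"
    unfolding RPO2_eq using B by (intro cINF_lower[OF bdd2]) auto
  then show "R_PO2 M X g \<le> (\<integral>\<omega>. LL B g \<omega> \<partial>M)" by simp
qed

lemma dev:
  assumes g: "g \<ge> 1" and B: "B \<in> grids" and ub: "(\<integral>\<omega>. \<bar>LL B g \<omega> - mu B\<bar> \<partial>M) \<le> e"
  shows "(\<integral>\<omega>. \<bar>LL B g \<omega> - (\<integral>\<omega>. LL B g \<omega> \<partial>M)\<bar> \<partial>M) \<le> 2 * e"
proof -
  let ?E = "\<integral>\<omega>. LL B g \<omega> \<partial>M"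
  have Li: "integrable M (LL B g)" by (rule LL_int[OF g B])
  have i1: "integrable M (\<lambda>\<omega>. \<bar>LL B g \<omega> - mu B\<bar>)" using Li by simp
  have "\<bar>?E - mu B\<bar> = \<bar>\<integral>\<omega>. LL B g \<omega> - mu B \<partial>M\<bar>" using Li by (simp add: prob_space)
  also have "\<dots> \<le> (\<integral>\<omega>. \<bar>LL B g \<omega> - mu B\<bar> \<partial>M)" by (rule integral_abs_bound)
  finally have a: "\<bar>?E - mu B\<bar> \<le> e" using ub by simp
  have "(\<integral>\<omega>. \<bar>LL B g \<omega> - ?E\<bar> \<partial>M) \<le> (\<integral>\<omega>. \<bar>LL B g \<omega> - mu B\<bar> + \<bar>?E - mu B\<bar> \<partial>M)"
    by (rule integral_mono) (use Li in auto)
  also have "\<dots> = (\<integral>\<omega>. \<bar>LL B g \<omega> - mu B\<bar> \<partial>M) + \<bar>?E - mu B\<bar>"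
    using i1 by (simp add: prob_space)
  also have "\<dots> \<le> 2 * e" using ub a by simp
  finally show ?thesis .
qed

lemma pair_bound:
  assumes g: "g \<ge> 1" and B1: "B1 \<in> grids" and B2: "B2 \<in> grids"
    and u1: "(\<integral>\<omega>. \<bar>LL B1 g \<omega> - mu B1\<bar> \<partial>M) \<le> e"
    and u2: "(\<integral>\<omega>. \<bar>LL B2 g \<omega> - mu B2\<bar> \<partial>M) \<le> e"
  shows "R_star M X g - 4 * e \<le> (\<integral>\<omega>. min (LL B1 g \<omega>) (LL B2 g \<omega>) \<partial>M)"
proof -
  let ?E1 = "\<integral>\<omega>. LL B1 g \<omega> \<partial>M" and ?E2 = "\<integral>\<omega>. LL B2 g \<omega> \<partial>M"
  have L1: "integrable M (LL B1 g)" by (rule LL_int[OF g B1])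
  have L2: "integrable M (LL B2 g)" by (rule LL_int[OF g B2])
  have r1: "R_star M X g \<le> ?E1" unfolding Rstar_eq by (rule cINF_lower[OF bdd1 B1])
  have r2: "R_star M X g \<le> ?E2" unfolding Rstar_eq by (rule cINF_lower[OF bdd1 B2])
  have "(\<integral>\<omega>. min ?E1 ?E2 - \<bar>LL B1 g \<omega> - ?E1\<bar> - \<bar>LL B2 g \<omega> - ?E2\<bar> \<partial>M) \<le> (\<integral>\<omega>. min (LL B1 g \<omega>) (LL B2 g \<omega>) \<partial>M)"
    by (rule integral_mono) (use L1 L2 in auto)
  moreover have "(\<integral>\<omega>. min ?E1 ?E2 - \<bar>LL B1 g \<omega> - ?E1\<bar> - \<bar>LL B2 g \<omega> - ?E2\<bar> \<partial>M)
      = min ?E1 ?E2 - (\<integral>\<omega>. \<bar>LL B1 g \<omega> - ?E1\<bar> \<partial>M) - (\<integral>\<omega>. \<bar>LL B2 g \<omega> - ?E2\<bar> \<partial>M)"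
    using L1 L2 by (simp add: prob_space)
  moreover have "(\<integral>\<omega>. \<bar>LL B1 g \<omega> - ?E1\<bar> \<partial>M) \<le> 2 * e" by (rule dev[OF g B1 u1])
  moreover have "(\<integral>\<omega>. \<bar>LL B2 g \<omega> - ?E2\<bar> \<partial>M) \<le> 2 * e" by (rule dev[OF g B2 u2])
  ultimately show ?thesis using r1 r2 by linarith
qed

lemma main: "(\<lambda>g. R_star M X g - R_PO2 M X g) \<longlonglongrightarrow> 0"
proof (rule tendstoI)
  fix r :: real assume r: "r > 0"
  show "eventually (\<lambda>g. dist (R_star M X g - R_PO2 M X g) 0 < r) sequentially"
  proof (rule eventually_mono[OF unif[of "r / 8"]])
    show "r / 8 > 0" using r by simp
    fix g assume h: "g \<ge> 1 \<and> (\<forall>B\<in>grids. (\<integral>\<omega>. \<bar>LL B g \<omega> - mu B\<bar> \<partial>M) \<le> r / 8)"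
    have "R_star M X g - 4 * (r / 8) \<le> R_PO2 M X g"
      unfolding RPO2_eq
    proof (rule cINF_greatest)
      show "grids \<times> grids \<noteq> {}" using grids_ne by simp
      fix BB assume "BB \<in> grids \<times> grids"
      then show "R_star M X g - 4 * (r / 8) \<le> (\<integral>\<omega>. min (LL (fst BB) g \<omega>) (LL (snd BB) g \<omega>) \<partial>M)"
        using h by (intro pair_bound) auto
    qed
    then show "dist (R_star M X g - R_PO2 M X g) 0 < r"
      using PO2_le[of g] r by (simp add: dist_real_def)
  qed
qed

end


theorem theorem1:
  fixes M :: "'a measure" and X :: "nat \<Rightarrow> 'a \<Rightarrow> real"
  assumes "prob_space M"
    and "\<And>i. i \<ge> 1 \<Longrightarrow> X i \<in> borel_measurable M"
    and "prob_space.indep_vars M (\<lambda>_. borel) X {1..}"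
    and "\<And>i. i \<ge> 1 \<Longrightarrow> distr M borel (X i) = distr M borel (X 1)"
    and "\<exists>c::real. AE \<omega> in M. \<bar>X 1 \<omega>\<bar> \<le> c"
  shows "(\<lambda>g. R_star M X g - R_PO2 M X g) \<longlonglongrightarrow> 0"
proof -
  have "blk M X"
    by (rule blk.intro[OF assms(1) blk_axioms.intro[OF assms(2-5)]])
  then show ?thesis by (rule blk.main)
qed

end
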